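(* Let $w \in S_n$ avoid the patterns $321$ and $231$, with Lehmer code $(L_1,\dots,L_n)$, and let $P$ be the bottom pipe dream of $w$. Let $i$ be any row of $P$ containing at least one crossing (i.e. $L_i \ge 1$), and consider the diagonal line going upward and rightward from the leftmost crossing of row $i$ (in square $(i,1)$), i.e. passing through the squares $(i-t, 1+t)$ for $t \ge 1$, $i-t \ge 1$. Then for every such $t$, neither the square $(i-t,1+t)$ on this line nor the square $(i-t,t)$ immediately to its left contains a crossing of $P$.
   Context: The Lehmer code of $w$ is $L_i = |\{j>i : w(j)<w(i)\}|$. The bottom pipe dream of $w \in S_n$ is the filling of the $n \times n$ grid (rows numbered $1,\dots,n$ from top to bottom, columns $1,\dots,n$ from left to right; square $(r,c)$ is in row $r$ and column $c$) in which square $(r,c)$ contains a crossing if $c \le L_r$ and a pair of elbows otherwise. Pattern containment: $w$ contains $p \in S_k$ if some subsequence $w(i_1),\dots,w(i_k)$, $i_1<\dots<i_k$, has the same relative order as $p$; otherwise $w$ avoids $p$. *)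

theory Defs
  imports "HOL-Combinatorics.Permutations"
begin

text \<open>Permutations w of S_n are functions nat => nat with w permutes {1..n}.
  Patterns p in S_k are given in one-line notation as lists [p(1),...,p(k)].\<close>

definition contains_pattern :: "nat \<Rightarrow> (nat \<Rightarrow> nat) \<Rightarrow> nat list \<Rightarrow> bool" where
  "contains_pattern n w p \<longleftrightarrow>
     (\<exists>f :: nat \<Rightarrow> nat.
        (\<forall>a < length p. f a \<in> {1..n}) \<and>
        (\<forall>a b. a < b \<and> b < length p \<longrightarrow> f a < f b) \<and>
        (\<forall>a < length p. \<forall>b < length p. (w (f a) < w (f b) \<longleftrightarrow> p ! a < p ! b)))"

definition avoids_pattern :: "nat \<Rightarrow> (nat \<Rightarrow> nat) \<Rightarrow> nat list \<Rightarrow> bool" where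
  "avoids_pattern n w p \<longleftrightarrow> \<not> contains_pattern n w p"

definition lehmer :: "nat \<Rightarrow> (nat \<Rightarrow> nat) \<Rightarrow> nat \<Rightarrow> nat" where
  "lehmer n w i = card {j. i < j \<and> j \<le> n \<and> w j < w i}"

definition bpd_crossing :: "nat \<Rightarrow> (nat \<Rightarrow> nat) \<Rightarrow> nat \<Rightarrow> nat \<Rightarrow> bool" where
  "bpd_crossing n w r c \<longleftrightarrow> r \<in> {1..n} \<and> c \<in> {1..n} \<and> c \<le> lehmer n w r"

end

theory Submission
  imports Defs
begin

lemma forb:
  assumes "w permutes {1..n}"
    and "avoids_pattern n w [3,2,1]"
    and "avoids_pattern n w [2,3,1]"
    and "1 \<le> a" "a < b" "b < c" "c \<le> n"
    and "w c < w a" "w c < w b"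
  shows False
proof -
  have inj: "inj w" using assms(1) permutes_inj by blast
  have ne: "w a \<noteq> w b" using inj assms(5) by (metis inj_eq less_irrefl)
  define f where "f = (\<lambda>k::nat. if k = 0 then a else if k = 1 then b else c)"
  have L: "\<And>P. (\<forall>x<3. P x) \<longleftrightarrow> P (0::nat) \<and> P 1 \<and> P 2"
    by (auto simp: numeral_3_eq_3 numeral_2_eq_2 less_Suc_eq)
  show False
  proof (cases "w a > w b")
    case True
    have "contains_pattern n w [3,2,1]"
      unfolding contains_pattern_def
      apply (rule exI[of _ f])
      using assms True by (simp add: L f_def)
    then show ?thesis using assms(2) avoids_pattern_def by blast
  next
    case False
    then have "w a < w b" using ne by simp
    have "contains_pattern n w [2,3,1]"
      unfolding contains_pattern_def
      apply (rule exI[of _ f])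
      using assms \<open>w a < w b\<close> by (simp add: L f_def)
    then show ?thesis using assms(3) avoids_pattern_def by blast
  qed
qed

theorem lemma17:
  fixes n :: nat and w :: "nat \<Rightarrow> nat" and i t :: nat
  assumes "w permutes {1..n}"
    and "avoids_pattern n w [3,2,1]"
    and "avoids_pattern n w [2,3,1]"
    and "i \<in> {1..n}"
    and "lehmer n w i \<ge> 1"
    and "t \<ge> 1" and "i - t \<ge> 1"
  shows "\<not> bpd_crossing n w (i - t) (1 + t) \<and> \<not> bpd_crossing n w (i - t) t"
proof -
  define r where "r = i - t"
  have r: "1 \<le> r" "r < i" using assms(6,7) unfolding r_def by auto
  have "{j. i < j \<and> j \<le> n \<and> w j < w i} \<noteq> {}"
    using assms(5) unfolding lehmer_def by (metis card.empty not_one_le_zero)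
  then obtain j where j: "i < j" "j \<le> n" "w j < w i" by blast
  have wrj: "w r < w j"
  proof (rule ccontr)
    assume "\<not> w r < w j"
    moreover have "w r \<noteq> w j" using permutes_inj[OF assms(1)] r j
      by (metis inj_eq less_trans less_irrefl)
    ultimately have "w j < w r" by simp
    then show False using forb[OF assms(1-3) r(1) r(2) j(1) j(2)] j(3) by blast
  qed
  have sub: "{j. r < j \<and> j \<le> n \<and> w j < w r} \<subseteq> {r<..<i}"
  proof
    fix k assume k: "k \<in> {j. r < j \<and> j \<le> n \<and> w j < w r}"
    have "k < i"
    proof (rule ccontr)
      assume "\<not> k < i"
      moreover have "k \<noteq> i" using k wrj j by auto
      ultimately have "i < k" by simp
      then show False using forb[OF assms(1-3) r(1) r(2), of k] k wrj j by auto
    qed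
    then show "k \<in> {r<..<i}" using k by auto
  qed
  have "lehmer n w r \<le> card {r<..<i}"
    unfolding lehmer_def by (rule card_mono[OF _ sub]) simp
  also have "\<dots> < t" using r unfolding r_def by simp
  finally have "lehmer n w r < t" .
  then show ?thesis unfolding bpd_crossing_def r_def[symmetric] by auto
qed

end
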